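(* Let $q:\mathsf D\to\mathbb R$ be a query with sensitivity $\Delta q\in(0,\infty)$, and let $\Lambda$ be a random variable with support in $(0,\infty)$ and $\mathbb E[\Lambda]<\infty$, with MGF $M_\Lambda(t)=\mathbb E[e^{t\Lambda}]$. Then the Randomized DP Laplace mechanism $\mathcal M_q$ with reciprocal scale $\Lambda$ is $\epsilon$-differentially private with $$\epsilon=\ln\left[\frac{\mathbb E(\Lambda)}{M_\Lambda'(-\Delta q)}\right],\qquad M'_\Lambda(-\Delta q)=\frac{d M_\Lambda(t)}{dt}\Big|_{t=-\Delta q}=\mathbb E\big[\Lambda e^{-\Delta q\,\Lambda}\big].$$
   Context: Databases form a set $\mathsf D$ with a symmetric adjacency relation $\mathrm{Adj}$. The sensitivity of $q:\mathsf D\to\mathbb R$ is $\Delta q=\sup\{|q(d)-q(d')|:\mathrm{Adj}(d,d')\}$. A randomized mechanism $M$ is $\epsilon$-differentially private if $\mathbb P(M(d)\in S)\le e^{\epsilon}\mathbb P(M(d')\in S)$ for all adjacent $d,d'$ and all Borel sets $S$. The Randomized DP Laplace mechanism with reciprocal-scale distribution $\Lambda$ (a random variable with values in $(0,\infty)$, playing the role of $1/b$ for the Laplace scale $b$) is defined by $\mathcal M_q(d)=q(d)+W$, where conditionally on $\Lambda=\lambda$ the noise $W$ is Laplace with mean $0$ and scale $1/\lambda$, i.e. has density $\frac{\lambda}{2}e^{-\lambda|w|}$; the pair $(\Lambda,W)$ is drawn independently of $d$. *)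

theory Defs
  imports "HOL-Probability.Probability"
begin

text \<open>Sensitivity of a query w.r.t. an adjacency relation, valued in the extended reals
  (the supremum of the empty set is 0 here, and it is \<infinity> for unbounded differences).\<close>
definition sensitivity :: "('d \<Rightarrow> 'd \<Rightarrow> bool) \<Rightarrow> ('d \<Rightarrow> real) \<Rightarrow> ereal" where
  "sensitivity Adj q = (SUP p \<in> {(d, d'). Adj d d'}. ereal \<bar>q (fst p) - q (snd p)\<bar>)"

definition laplace_density :: "real \<Rightarrow> real \<Rightarrow> real \<Rightarrow> real" where
  "laplace_density lam mu x = lam / 2 * exp (- lam * \<bar>x - mu\<bar>)"

text \<open>Randomized DP Laplace mechanism: L is the distribution of the reciprocal scale Lambda;
  the output distribution on database d is the mixture over Lambda of Laplace(q d, 1/Lambda).\<close>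
definition rand_laplace_mech :: "real measure \<Rightarrow> ('d \<Rightarrow> real) \<Rightarrow> 'd \<Rightarrow> real measure" where
  "rand_laplace_mech L q d =
     L \<bind> (\<lambda>lam. density lborel (\<lambda>x. ennreal (laplace_density lam (q d) x)))"

definition differentially_private ::
    "('d \<Rightarrow> 'd \<Rightarrow> bool) \<Rightarrow> ('d \<Rightarrow> real measure) \<Rightarrow> real \<Rightarrow> bool" where
  "differentially_private Adj M \<epsilon> \<longleftrightarrow>
     (\<forall>d d'. Adj d d' \<longrightarrow>
        (\<forall>S \<in> sets borel. measure (M d) S \<le> exp \<epsilon> * measure (M d') S))"

definition mgf :: "real measure \<Rightarrow> real \<Rightarrow> real" where
  "mgf L t = (\<integral>l. exp (t * l) \<partial>L)"

end

theory Submission imports Defs begin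

lemma exp_rem: "\<bar>exp y - 1 - y\<bar> \<le> y^2 * exp \<bar>y\<bar>" for y :: real
proof -
  obtain s where s: "\<bar>s\<bar> \<le> \<bar>y\<bar>" "exp y = (\<Sum>m<2. y^m / fact m) + exp s / fact 2 * y^2"
    using Maclaurin_exp_le[of y 2] by blast
  have e: "exp y - 1 - y = exp s / 2 * y^2" using s(2) by (simp add: numeral_2_eq_2)
  have "exp s \<le> exp \<bar>y\<bar>" using s(1) by simp
  hence h: "exp s / 2 \<le> exp \<bar>y\<bar>" using exp_gt_zero[of s] by linarith
  have "0 \<le> exp s / 2 * y^2" by simp
  hence "\<bar>exp y - 1 - y\<bar> = exp s / 2 * y^2" unfolding e by (rule abs_of_nonneg)
  also have "\<dots> \<le> exp \<bar>y\<bar> * y^2" using h by (rule mult_right_mono) simp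
  finally show ?thesis by (simp add: mult.commute)
qed

lemma sq_exp_bound: fixes l c :: real assumes "0 \<le> l" "0 < c"
  shows "l^2 * exp (- c * l) \<le> 4 / c^2"
proof -
  have "1 + c*l/2 \<le> exp (c*l/2)" by (rule exp_ge_add_one_self)
  moreover have "0 \<le> c*l/2" using assms by simp
  ultimately have "(c*l/2)^2 \<le> exp (c*l/2)^2" by (intro power_mono) linarith+
  also have "exp (c*l/2)^2 = exp (c*l)" by (simp add: power2_eq_square flip: exp_add)
  finally have "c^2 * l^2 \<le> 4 * exp (c*l)" by (simp add: power_mult_distrib power_divide)
  hence "c^2 * (l^2 * exp (- c*l)) \<le> 4" 
    by (simp add: exp_minus field_simps)
  thus ?thesis using assms by (simp add: field_simps)
qed

lemma mgf_deriv:
  fixes L :: "real measure" and c :: real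
  assumes P: "prob_space L" and S: "sets L = sets borel" and pos: "AE l in L. 0 < l" and c: "0 < c"
  shows "((\<lambda>t. \<integral>l. exp (t * l) \<partial>L) has_real_derivative (\<integral>l. l * exp (- c * l) \<partial>L)) (at (- c))"
proof -
  interpret prob_space L by (rule P)
  have meas: "\<And>f. f \<in> borel_measurable L \<longleftrightarrow> f \<in> borel_measurable borel"
    by (simp add: measurable_cong_sets[OF S refl])
  define D where "D = (\<integral>l. l * exp (- c * l) \<partial>L)"
  define F where "F = (\<lambda>t. \<integral>l. exp (t * l) \<partial>L)"
  define K where "K = 4 / (c/2)^2"
  have int_exp: "integrable L (\<lambda>l. exp (t * l))" if "t \<le> 0" for t
  proof (rule integrable_const_bound[where B=1])
    show "AE x in L. norm (exp (t * x)) \<le> 1"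
      using pos by eventually_elim (use that in \<open>auto simp: mult_nonpos_nonneg\<close>)
  qed (simp add: meas)
  have int_D: "integrable L (\<lambda>l. l * exp (- c * l))"
  proof (rule integrable_const_bound[where B="1/c"])
    show "AE x in L. norm (x * exp (- c * x)) \<le> 1/c"
      using pos
    proof eventually_elim
      case (elim x)
      have "1 + c * x \<le> exp (c * x)" by (rule exp_ge_add_one_self)
      hence "c * x \<le> exp (c * x)" by linarith
      hence "c * x * exp (- c * x) \<le> 1" by (simp add: exp_minus field_simps)
      thus ?case using elim c by (simp add: field_simps abs_mult)
    qed
  qed (simp add: meas)
  have key: "\<bar>F (- c + h) - F (- c) - h * D\<bar> \<le> K * h^2" if h: "\<bar>h\<bar> \<le> c / 2" for h
  proof -
    have "F (- c + h) - F (- c) - h * D =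
        (\<integral>l. exp ((- c + h) * l) - exp (- c * l) - h * (l * exp (- c * l)) \<partial>L)"
    proof -
      have i1: "integrable L (\<lambda>l. exp ((- c + h) * l))" using h by (intro int_exp) auto
      have i2: "integrable L (\<lambda>l. exp (- c * l))" using c by (intro int_exp) auto
      show ?thesis unfolding F_def D_def
        by (simp only: Bochner_Integration.integral_diff[OF Bochner_Integration.integrable_diff[OF i1 i2] integrable_mult_right[OF int_D]]
             Bochner_Integration.integral_diff[OF i1 i2] integral_mult_right_zero)
    qed
    also have "\<bar>\<dots>\<bar> \<le> K * h^2"
    proof -
      have pw: "AE l in L. \<bar>exp ((- c + h) * l) - exp (- c * l) - h * (l * exp (- c * l))\<bar> \<le> K * h^2"
        using pos
      proof eventually_elim
        case (elim l)
        have "exp ((- c + h) * l) - exp (- c * l) - h * (l * exp (- c * l))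
            = exp (- c * l) * (exp (h * l) - 1 - h * l)"
          by (simp add: algebra_simps flip: exp_add)
        hence "\<bar>exp ((- c + h) * l) - exp (- c * l) - h * (l * exp (- c * l))\<bar>
             = exp (- c * l) * \<bar>exp (h * l) - 1 - h * l\<bar>" by (simp add: abs_mult)
        also have "\<dots> \<le> exp (- c * l) * ((h * l)^2 * exp \<bar>h * l\<bar>)"
          by (intro mult_left_mono exp_rem) simp
        also have "\<dots> = h^2 * (l^2 * (exp (- c * l) * exp (\<bar>h\<bar> * l)))"
          using elim by (simp add: abs_mult power_mult_distrib)
        also have "exp (- c * l) * exp (\<bar>h\<bar> * l) \<le> exp (- (c/2) * l)"
          unfolding exp_add[symmetric] using h elim by (intro exp_mono) (simp add: algebra_simps mult_right_mono)
        hence "h^2 * (l^2 * (exp (- c * l) * exp (\<bar>h\<bar> * l))) \<le> h^2 * (l^2 * exp (- (c/2) * l))"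
          by (intro mult_left_mono) auto
        also have "\<dots> \<le> h^2 * K"
          unfolding K_def using elim c by (intro mult_left_mono sq_exp_bound) auto
        finally show ?case by (simp add: mult.commute)
      qed
      have ii: "integrable L (\<lambda>l. exp ((- c + h) * l) - exp (- c * l) - h * (l * exp (- c * l)))"
        using h by (intro Bochner_Integration.integrable_diff int_exp int_D integrable_mult_right) auto
      have "(\<integral>l. exp ((- c + h) * l) - exp (- c * l) - h * (l * exp (- c * l)) \<partial>L) \<le> K * h^2"
        by (rule integral_le_const[OF ii]) (use pw in \<open>eventually_elim, simp\<close>)
      moreover have "- (K * h^2) \<le> (\<integral>l. exp ((- c + h) * l) - exp (- c * l) - h * (l * exp (- c * l)) \<partial>L)"
        by (rule integral_ge_const[OF ii]) (use pw in \<open>eventually_elim, simp\<close>)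
      ultimately show ?thesis by simp
    qed
    finally show ?thesis .
  qed
  have "((\<lambda>h. (F (- c + h) - F (- c)) / h - D) \<longlongrightarrow> 0) (at 0)"
  proof (rule Lim_null_comparison)
    have ev: "\<forall>\<^sub>F h in at (0::real). \<bar>h\<bar> < c / 2 \<and> h \<noteq> 0"
      using c by (auto simp: eventually_at intro!: exI[of _ "c/2"])
    show "\<forall>\<^sub>F h in at 0. norm ((F (- c + h) - F (- c)) / h - D) \<le> K * \<bar>h\<bar>"
      using ev
    proof eventually_elim
      case (elim h)
      have "(F (- c + h) - F (- c)) / h - D = (F (- c + h) - F (- c) - h * D) / h"
        using elim by (simp add: field_simps)
      hence "norm ((F (- c + h) - F (- c)) / h - D) = \<bar>F (- c + h) - F (- c) - h * D\<bar> / \<bar>h\<bar>"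
        by simp
      also have "\<dots> \<le> K * h^2 / \<bar>h\<bar>" using key[of h] elim by (intro divide_right_mono) auto
      also have "\<dots> = K * \<bar>h\<bar>"
      proof -
        have "h^2 = \<bar>h\<bar> * \<bar>h\<bar>" by (metis abs_mult_self_eq power2_eq_square)
        thus ?thesis using elim by (simp only:) (simp add: field_simps)
      qed
      finally show ?case .
    qed
    show "((\<lambda>h. K * \<bar>h\<bar>) \<longlongrightarrow> 0) (at 0)"
      by (rule tendsto_mult_right_zero, rule tendsto_rabs_zero, rule tendsto_ident_at)
  qed
  hence "((\<lambda>h. (F (- c + h) - F (- c)) / h) \<longlongrightarrow> D) (at 0)" by (rule LIM_zero_cancel)
  thus ?thesis unfolding DERIV_def F_def D_def .
qed


lemma exp_pair_ineq:
  fixes l m u v :: real assumes "0 < l" "0 < m" "0 \<le> u" "0 \<le> v"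
  shows "l * exp (- u * l) * (m * exp (- v * m)) + l * exp (- v * l) * (m * exp (- u * m))
    \<le> l * (m * exp (- (u + v) * m)) + l * exp (- (u + v) * l) * m"
proof -
  have "0 \<le> (exp (- u * l) - exp (- u * m)) * (exp (- v * l) - exp (- v * m))"
  proof (cases "l \<le> m")
    case True
    then show ?thesis using assms by (intro mult_nonneg_nonneg) (auto simp: mult_left_mono)
  next
    case False
    then show ?thesis using assms by (intro mult_nonpos_nonpos) (auto simp: mult_left_mono)
  qed
  hence "0 \<le> l * m * ((exp (- u * l) - exp (- u * m)) * (exp (- v * l) - exp (- v * m)))"
    using assms by simp
  thus ?thesis by (simp add: algebra_simps flip: exp_add)
qed


locale lam_dist =
  fixes L :: "real measure"
  assumes P: "prob_space L" and S: "sets L = sets borel" and pos: "AE l in L. 0 < l"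
    and intL: "integrable L (\<lambda>l. l)"
begin

interpretation prob_space L by (rule P)

lemma meas: "f \<in> borel_measurable L \<longleftrightarrow> f \<in> borel_measurable borel"
  by (simp add: measurable_cong_sets[OF S refl])

definition Ib :: "real \<Rightarrow> real" where "Ib b = (\<integral>l. l * exp (- b * l) \<partial>L)"

lemma int_I: assumes "0 \<le> b" shows "integrable L (\<lambda>l. l * exp (- b * l))"
proof (rule Bochner_Integration.integrable_bound[OF intL])
  show "(\<lambda>l. l * exp (- b * l)) \<in> borel_measurable L" by (simp add: meas)
  show "AE x in L. norm (x * exp (- b * x)) \<le> norm x"
    using pos
  proof eventually_elim
    case (elim x)
    have "exp (- b * x) \<le> 1" using elim assms by (simp add: mult_nonneg_nonneg)
    thus ?case using elim by (simp add: abs_mult mult_left_le)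
  qed
qed

lemma I_nonneg: "0 \<le> b \<Longrightarrow> 0 \<le> Ib b"
  unfolding Ib_def by (rule integral_nonneg_AE) (use pos in \<open>eventually_elim, simp\<close>)

lemma I_pos: assumes "0 \<le> b" shows "0 < Ib b"
proof -
  have "Ib b \<noteq> 0"
  proof
    assume "Ib b = 0"
    hence "AE l in L. l * exp (- b * l) = 0" unfolding Ib_def
      using integral_nonneg_eq_0_iff_AE[OF int_I[OF assms]] pos
      by (simp add: eventually_mono less_imp_le)
    hence "AE l in L. False" using pos by eventually_elim simp
    thus False by (simp add: AE_False)
  qed
  thus ?thesis using I_nonneg[OF assms] by simp
qed

lemma I_mono: assumes "0 \<le> a" "a \<le> b" shows "Ib b \<le> Ib a"
  unfolding Ib_def
proof (rule integral_mono_AE[OF int_I int_I])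
  show "AE x in L. x * exp (- b * x) \<le> x * exp (- a * x)"
    using pos by eventually_elim (use assms in \<open>auto intro!: mult_left_mono mult_right_mono\<close>)
qed (use assms in auto)

lemma nn_I: assumes "0 \<le> b" shows "(\<integral>\<^sup>+l. ennreal (l * exp (- b * l)) \<partial>L) = ennreal (Ib b)"
  unfolding Ib_def
  by (rule nn_integral_eq_integral[OF int_I[OF assms]]) (use pos in \<open>eventually_elim, simp\<close>)

lemma key_real: assumes u: "0 \<le> u" and v: "0 \<le> v" shows "Ib u * Ib v \<le> Ib 0 * Ib (u + v)"
proof -
  define f where "f b l = ennreal (l * exp (- b * l))" for b l
  have fm[measurable]: "f b \<in> borel_measurable L" for b unfolding f_def by (simp add: meas)
  have fI: "0 \<le> b \<Longrightarrow> (\<integral>\<^sup>+l. f b l \<partial>L) = ennreal (Ib b)" for b unfolding f_def by (rule nn_I)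
  have pw: "f u l * f v m + f v l * f u m \<le> f 0 l * f (u+v) m + f (u+v) l * f 0 m" for l m
  proof (cases "0 < l \<and> 0 < m")
    case True
    then show ?thesis unfolding f_def
      using exp_pair_ineq[of l m u v] u v
      by (simp add: ennreal_mult[symmetric] ennreal_plus[symmetric] del: ennreal_plus)
  next
    case False
    hence "f u l * f v m = 0 \<and> f v l * f u m = 0" unfolding f_def
      by (auto simp: ennreal_neg mult_nonpos_nonneg)
    hence "f u l * f v m + f v l * f u m = 0" by (simp only: add_0)
    thus ?thesis by (simp only: zero_le)
  qed
  have dbl: "(\<integral>\<^sup>+l. \<integral>\<^sup>+m. f a l * f b m + f b l * f a m \<partial>L \<partial>L) = ennreal (Ib a) * ennreal (Ib b) + ennreal (Ib b) * ennreal (Ib a)"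
    if "0 \<le> a" "0 \<le> b" for a b
    using that by (simp add: nn_integral_add nn_integral_cmult nn_integral_multc fI)
  have "ennreal (Ib u) * ennreal (Ib v) + ennreal (Ib v) * ennreal (Ib u)
     \<le> ennreal (Ib 0) * ennreal (Ib (u+v)) + ennreal (Ib (u+v)) * ennreal (Ib 0)"
    using u v dbl[of u v] dbl[of 0 "u+v"]
    by (metis (no_types, lifting) add_nonneg_nonneg nn_integral_mono order_refl pw)
  hence "ennreal (Ib u * Ib v + Ib v * Ib u) \<le> ennreal (Ib 0 * Ib (u+v) + Ib (u+v) * Ib 0)"
  proof -
    have e: "ennreal (Ib a) * ennreal (Ib b) = ennreal (Ib a * Ib b)" if "0 \<le> a" "0 \<le> b" for a b
      using that I_nonneg by (simp add: ennreal_mult)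
    have n: "0 \<le> Ib a * Ib b" if "0 \<le> a" "0 \<le> b" for a b
      using that I_nonneg by simp
    show ?thesis using \<open>ennreal (Ib u) * ennreal (Ib v) + _ \<le> _\<close> u v
      by (simp only: e add_nonneg_nonneg order_refl ennreal_plus[symmetric] n)
  qed
  hence "Ib u * Ib v + Ib v * Ib u \<le> Ib 0 * Ib (u+v) + Ib (u+v) * Ib 0"
    using u v I_nonneg by (subst (asm) ennreal_le_iff) (auto intro!: add_nonneg_nonneg mult_nonneg_nonneg)
  thus ?thesis by (simp add: mult.commute)
qed


lemma lap_total: "(\<integral>\<^sup>+x. ennreal (laplace_density lam \<mu> x) \<partial>lborel) \<le> 1"
proof (cases "0 < lam")
  case False
  hence "\<And>x. ennreal (laplace_density lam \<mu> x) = 0"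
    unfolding laplace_density_def by (intro ennreal_neg) (simp add: mult_nonpos_nonneg)
  thus ?thesis by simp
next
  case lam: True
  define E where "E = exponential_density lam"
  have Em[measurable]: "E \<in> borel_measurable borel" unfolding E_def by simp
  have E1: "(\<integral>\<^sup>+x. ennreal (E x) \<partial>lborel) = 1"
  proof -
    interpret EP: prob_space "density lborel (\<lambda>x. ennreal (E x))"
      unfolding E_def by (rule prob_space_exponential_density[OF lam])
    have "emeasure (density lborel (\<lambda>x. ennreal (E x))) UNIV = 1"
      using EP.emeasure_space_1 by simp
    thus ?thesis by (simp add: emeasure_density)
  qed
  have E2: "(\<integral>\<^sup>+x. ennreal (E (-x)) \<partial>lborel) = 1"
    using nn_integral_real_affine[of "\<lambda>x. ennreal (E x)" "-1" 0] E1 by simp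
  have "(\<integral>\<^sup>+x. ennreal (laplace_density lam \<mu> x) \<partial>lborel)
      = (\<integral>\<^sup>+x. ennreal (laplace_density lam \<mu> (\<mu> + 1 * x)) \<partial>lborel)"
    using nn_integral_real_affine[of "\<lambda>x. ennreal (laplace_density lam \<mu> x)" 1 \<mu>]
    by (simp add: laplace_density_def)
  also have "\<dots> \<le> (\<integral>\<^sup>+x. ennreal (1/2) * ennreal (E x) + ennreal (1/2) * ennreal (E (-x)) \<partial>lborel)"
  proof (rule nn_integral_mono)
    fix x :: real
    have "laplace_density lam \<mu> (\<mu> + 1 * x) \<le> 1/2 * E x + 1/2 * E (-x)"
      using lam unfolding laplace_density_def E_def exponential_density_def
      by (cases "x < 0"; cases "x = 0") (auto simp: mult.commute)
    hence "ennreal (laplace_density lam \<mu> (\<mu> + 1 * x)) \<le> ennreal (1/2 * E x + 1/2 * E (-x))"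
      by (rule ennreal_leI)
    also have "\<dots> = ennreal (1/2) * ennreal (E x) + ennreal (1/2) * ennreal (E (-x))"
    proof -
      have a: "0 \<le> 1/2 * E y" for y using lam by (simp add: E_def exponential_density_nonneg)
      have h: "(0::real) \<le> 1/2" by simp
      show ?thesis by (simp only: ennreal_plus[OF a a] ennreal_mult'[OF h])
    qed
    finally show "ennreal (laplace_density lam \<mu> (\<mu> + 1 * x)) \<le> ennreal (1/2) * ennreal (E x) + ennreal (1/2) * ennreal (E (-x))" .
  qed
  also have "\<dots> = ennreal (1/2) * 1 + ennreal (1/2) * 1"
    by (simp add: nn_integral_add nn_integral_cmult E1 E2)
  also have "\<dots> = 1"
  proof -
    have "ennreal (1/2) + ennreal (1/2) = ennreal (1/2 + 1/2)" by (rule ennreal_plus[symmetric]) auto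
    thus ?thesis by simp
  qed
  finally show ?thesis .
qed

definition Kern :: "real \<Rightarrow> real \<Rightarrow> real measure" where
  "Kern \<mu> lam = density lborel (\<lambda>x. ennreal (laplace_density lam \<mu> x))"

lemma kern_meas: "Kern \<mu> \<in> measurable L (subprob_algebra borel)"
proof (rule measurable_subprob_algebra)
  fix lam assume "lam \<in> space L"
  show "subprob_space (Kern \<mu> lam)"
  proof
    show "emeasure (Kern \<mu> lam) (space (Kern \<mu> lam)) \<le> 1"
      unfolding Kern_def using lap_total[of lam \<mu>]
      by (simp add: emeasure_density laplace_density_def)
  qed (simp add: Kern_def)
  show "sets (Kern \<mu> lam) = sets borel" by (simp add: Kern_def)
next
  fix A :: "real set" assume A: "A \<in> sets borel"
  have "(\<lambda>lam. \<integral>\<^sup>+x. ennreal (laplace_density lam \<mu> x) * indicator A x \<partial>lborel) \<in> borel_measurable borel"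
    using A unfolding laplace_density_def by measurable
  thus "(\<lambda>lam. emeasure (Kern \<mu> lam) A) \<in> borel_measurable L"
    unfolding Kern_def meas using A by (subst emeasure_density) (auto simp: laplace_density_def)
qed

lemma nn_lap: "(\<integral>\<^sup>+lam. ennreal (laplace_density lam \<mu> x) \<partial>L) = ennreal (Ib \<bar>x - \<mu>\<bar> / 2)"
proof -
  have "(\<integral>\<^sup>+lam. ennreal (laplace_density lam \<mu> x) \<partial>L)
     = (\<integral>\<^sup>+lam. ennreal (1/2) * ennreal (lam * exp (- \<bar>x - \<mu>\<bar> * lam)) \<partial>L)"
  proof (rule nn_integral_cong)
    fix lam
    have h: "(0::real) \<le> 1/2" by simp
    have "laplace_density lam \<mu> x = 1/2 * (lam * exp (- \<bar>x - \<mu>\<bar> * lam))"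
      by (simp add: laplace_density_def mult.commute)
    thus "ennreal (laplace_density lam \<mu> x) = ennreal (1/2) * ennreal (lam * exp (- \<bar>x - \<mu>\<bar> * lam))"
      by (simp only: ennreal_mult'[OF h])
  qed
  also have "\<dots> = ennreal (1/2) * ennreal (Ib \<bar>x - \<mu>\<bar>)"
    by (subst nn_integral_cmult) (simp add: meas, simp only: nn_I[OF abs_ge_zero])
  also have "\<dots> = ennreal (Ib \<bar>x - \<mu>\<bar> / 2)"
  proof -
    have h: "(0::real) \<le> 1/2" by simp
    show ?thesis by (simp only: ennreal_mult'[OF h, symmetric]) (simp add: mult.commute)
  qed
  finally show ?thesis .
qed


lemma Ib_meas[measurable]: "(\<lambda>x. ennreal (Ib \<bar>x - \<mu>\<bar> / 2)) \<in> borel_measurable borel"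
proof -
  have eq: "(\<lambda>x. ennreal (Ib \<bar>x - \<mu>\<bar> / 2)) = (\<lambda>x. \<integral>\<^sup>+lam. ennreal (laplace_density lam \<mu> x) \<partial>L)"
    using nn_lap by simp
  have "sets (borel \<Otimes>\<^sub>M L) = sets (borel \<Otimes>\<^sub>M borel)"
    by (intro sets_pair_measure_cong S) simp
  hence eqm: "borel_measurable (borel \<Otimes>\<^sub>M L) = borel_measurable (borel \<Otimes>\<^sub>M borel)"
    by (rule measurable_cong_sets[OF _ refl])
  show ?thesis unfolding eq
  proof (rule borel_measurable_nn_integral)
    show "(\<lambda>(x, lam). ennreal (laplace_density lam \<mu> x)) \<in> borel_measurable (borel \<Otimes>\<^sub>M L)"
      unfolding eqm laplace_density_def by measurable
  qed
qed

lemma emeas_mix: assumes A: "A \<in> sets borel"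
  shows "emeasure (L \<bind> Kern \<mu>) A = (\<integral>\<^sup>+x. ennreal (Ib \<bar>x - \<mu>\<bar> / 2) * indicator A x \<partial>lborel)"
proof -
  interpret PS: pair_sigma_finite L lborel ..
  have "emeasure (L \<bind> Kern \<mu>) A = (\<integral>\<^sup>+lam. emeasure (Kern \<mu> lam) A \<partial>L)"
    by (rule emeasure_bind[OF not_empty kern_meas A])
  also have "\<dots> = (\<integral>\<^sup>+lam. \<integral>\<^sup>+x. ennreal (laplace_density lam \<mu> x) * indicator A x \<partial>lborel \<partial>L)"
  proof (rule nn_integral_cong)
    fix lam
    have m: "(\<lambda>x. ennreal (laplace_density lam \<mu> x)) \<in> borel_measurable lborel"
      unfolding laplace_density_def by measurable
    show "emeasure (Kern \<mu> lam) A = (\<integral>\<^sup>+x. ennreal (laplace_density lam \<mu> x) * indicator A x \<partial>lborel)"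
      unfolding Kern_def by (rule emeasure_density[OF m]) (use A in simp)
  qed
  also have "\<dots> = (\<integral>\<^sup>+x. \<integral>\<^sup>+lam. ennreal (laplace_density lam \<mu> x) * indicator A x \<partial>L \<partial>lborel)"
  proof (rule PS.Fubini'[symmetric])
    have "sets (L \<Otimes>\<^sub>M lborel) = sets (borel \<Otimes>\<^sub>M borel)"
      by (intro sets_pair_measure_cong S) simp
    hence eq: "borel_measurable (L \<Otimes>\<^sub>M lborel) = borel_measurable (borel \<Otimes>\<^sub>M borel)"
      by (rule measurable_cong_sets[OF _ refl])
    show "(\<lambda>(lam, x). ennreal (laplace_density lam \<mu> x) * indicator A x) \<in> borel_measurable (L \<Otimes>\<^sub>M lborel)"
      unfolding eq using A unfolding laplace_density_def by measurable
  qed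
  also have "\<dots> = (\<integral>\<^sup>+x. ennreal (Ib \<bar>x - \<mu>\<bar> / 2) * indicator A x \<partial>lborel)"
  proof (rule nn_integral_cong)
    fix x
    have m: "(\<lambda>lam. ennreal (laplace_density lam \<mu> x)) \<in> borel_measurable L"
      unfolding meas laplace_density_def by measurable
    show "(\<integral>\<^sup>+lam. ennreal (laplace_density lam \<mu> x) * indicator A x \<partial>L) = ennreal (Ib \<bar>x - \<mu>\<bar> / 2) * indicator A x"
      by (simp only: nn_integral_multc[OF m] nn_lap)
  qed
  finally show ?thesis .
qed

end


theorem mainTheorem2:
  fixes Adj :: "'d \<Rightarrow> 'd \<Rightarrow> bool"
    and q :: "'d \<Rightarrow> real"
    and L :: "real measure"
  assumes "symp Adj"
    and "0 < sensitivity Adj q" and "sensitivity Adj q < \<infinity>"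
    and "prob_space L" and "sets L = sets borel"
    and "AE l in L. 0 < l"
    and "integrable L (\<lambda>l. l)"
  shows "(mgf L has_real_derivative (\<integral>l. l * exp (- real_of_ereal (sensitivity Adj q) * l) \<partial>L))
           (at (- real_of_ereal (sensitivity Adj q)))
         \<and> differentially_private Adj (rand_laplace_mech L q)
             (ln ((\<integral>l. l \<partial>L) / (\<integral>l. l * exp (- real_of_ereal (sensitivity Adj q) * l) \<partial>L)))"
proof -
  interpret LD: lam_dist L using assms(4-7) by (simp add: lam_dist_def)
  interpret prob_space L by (rule assms(4))
  define \<Delta> where "\<Delta> = real_of_ereal (sensitivity Adj q)"
  have sens: "sensitivity Adj q = ereal \<Delta>" unfolding \<Delta>_def using assms(2,3)
    by (cases "sensitivity Adj q") auto
  have \<Delta>pos: "0 < \<Delta>" using assms(2) sens by simp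
  have adj: "\<bar>q d - q d'\<bar> \<le> \<Delta>" if "Adj d d'" for d d'
  proof -
    have "ereal \<bar>q d - q d'\<bar> \<le> sensitivity Adj q"
      unfolding sensitivity_def using that by (intro SUP_upper2[of "(d, d')"]) auto
    thus ?thesis using sens by simp
  qed
  have part1: "(mgf L has_real_derivative (\<integral>l. l * exp (- \<Delta> * l) \<partial>L)) (at (- \<Delta>))"
    unfolding mgf_def by (rule mgf_deriv[OF assms(4,5,6) \<Delta>pos])
  define C where "C = LD.Ib 0 / LD.Ib \<Delta>"
  have IDpos: "0 < LD.Ib \<Delta>" using LD.I_pos \<Delta>pos by simp
  have I0pos: "0 < LD.Ib 0" using LD.I_pos by simp
  have Cpos: "0 < C" unfolding C_def using IDpos I0pos by simp
  have pw: "LD.Ib b \<le> C * LD.Ib a" if "0 \<le> a" "0 \<le> b" "a - \<Delta> \<le> b" for a b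
  proof -
    have "LD.Ib b * LD.Ib \<Delta> \<le> LD.Ib 0 * LD.Ib a"
    proof (cases "a \<le> \<Delta>")
      case True
      have "LD.Ib b \<le> LD.Ib 0" using that by (intro LD.I_mono) auto
      moreover have "LD.Ib \<Delta> \<le> LD.Ib a" using that True by (intro LD.I_mono) auto
      ultimately show ?thesis using IDpos LD.I_nonneg[of b] that
        by (intro mult_mono) auto
    next
      case False
      have "LD.Ib b \<le> LD.Ib (a - \<Delta>)" using that False by (intro LD.I_mono) auto
      hence "LD.Ib b * LD.Ib \<Delta> \<le> LD.Ib (a - \<Delta>) * LD.Ib \<Delta>"
        using IDpos by (intro mult_right_mono) auto
      also have "\<dots> \<le> LD.Ib 0 * LD.Ib (a - \<Delta> + \<Delta>)"
        using False \<Delta>pos by (intro LD.key_real) auto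
      finally show ?thesis by simp
    qed
    thus ?thesis unfolding C_def using IDpos by (simp add: field_simps)
  qed
  have part2: "differentially_private Adj (rand_laplace_mech L q) (ln C)"
    unfolding differentially_private_def
  proof (intro allI impI ballI)
    fix d d' and A :: "real set"
    assume dd: "Adj d d'" and A: "A \<in> sets borel"
    have M: "rand_laplace_mech L q e = L \<bind> LD.Kern (q e)" for e
      unfolding rand_laplace_mech_def LD.Kern_def ..
    have "emeasure (rand_laplace_mech L q d) A = (\<integral>\<^sup>+x. ennreal (LD.Ib \<bar>x - q d\<bar> / 2) * indicator A x \<partial>lborel)"
      unfolding M by (rule LD.emeas_mix[OF A])
    also have "\<dots> \<le> (\<integral>\<^sup>+x. ennreal C * (ennreal (LD.Ib \<bar>x - q d'\<bar> / 2) * indicator A x) \<partial>lborel)"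
    proof (rule nn_integral_mono)
      fix x
      have "\<bar>x - q d'\<bar> - \<Delta> \<le> \<bar>x - q d\<bar>" using adj[OF dd] by linarith
      hence "LD.Ib \<bar>x - q d\<bar> \<le> C * LD.Ib \<bar>x - q d'\<bar>" by (intro pw) auto
      hence "ennreal (LD.Ib \<bar>x - q d\<bar> / 2) \<le> ennreal (C * (LD.Ib \<bar>x - q d'\<bar> / 2))"
        by (intro ennreal_leI) simp
      also have "\<dots> = ennreal C * ennreal (LD.Ib \<bar>x - q d'\<bar> / 2)"
        using Cpos by (intro ennreal_mult') simp
      finally show "ennreal (LD.Ib \<bar>x - q d\<bar> / 2) * indicator A x \<le> ennreal C * (ennreal (LD.Ib \<bar>x - q d'\<bar> / 2) * indicator A x)"
        unfolding mult.assoc[symmetric] by (rule mult_right_mono) simp_all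
    qed
    also have "\<dots> = ennreal C * emeasure (rand_laplace_mech L q d') A"
    proof -
      have "(\<lambda>x. ennreal (LD.Ib \<bar>x - q d'\<bar> / 2) * indicator A x) \<in> borel_measurable lborel"
        using A by measurable
      thus ?thesis unfolding M LD.emeas_mix[OF A] by (rule nn_integral_cmult)
    qed
    finally have le: "emeasure (rand_laplace_mech L q d) A \<le> ennreal C * emeasure (rand_laplace_mech L q d') A" .
    have sp: "subprob_space (rand_laplace_mech L q d')"
      unfolding M by (intro subprob_space_bind[OF _ LD.kern_meas]) (simp add: prob_space_imp_subprob_space assms(4))
    have fin: "emeasure (rand_laplace_mech L q d') A < \<infinity>"
    proof -
      have "emeasure (rand_laplace_mech L q d') A \<noteq> top"
        by (rule subprob_space.emeasure_subprob_space_less_top[OF sp])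
      thus ?thesis by (simp add: less_top)
    qed
    have "measure (rand_laplace_mech L q d) A \<le> enn2real (ennreal C * emeasure (rand_laplace_mech L q d') A)"
      unfolding measure_def by (rule enn2real_mono[OF le]) (use fin in \<open>simp add: ennreal_mult_less_top\<close>)
    also have "\<dots> = C * measure (rand_laplace_mech L q d') A"
      using Cpos by (simp add: enn2real_mult measure_def)
    finally show "measure (rand_laplace_mech L q d) A \<le> exp (ln C) * measure (rand_laplace_mech L q d') A"
      using Cpos by simp
  qed
  have "ln ((\<integral>l. l \<partial>L) / (\<integral>l. l * exp (- \<Delta> * l) \<partial>L)) = ln C"
    unfolding C_def LD.Ib_def by simp
  thus ?thesis using part1 part2 unfolding \<Delta>_def by simp
qed

end
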